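(* Let $G=(V,R,E)$ be a finite bipartite version–record graph, let $\mathbb{T}=(V,\mathbb{E})$ be a version tree on $V$ satisfying the standing assumptions below, and let $\delta\le 1$ be a positive parameter. If every edge $(v_i,v_j)\in\mathbb{E}$ has weight $w(v_i,v_j)>\delta|R|$, then the checkout cost when all versions are placed in one single partition, namely $\mathcal{C}_{avg}=|R|$, satisfies $\mathcal{C}_{avg}<\frac{1}{\delta}\cdot\frac{|E|}{|V|}$.
   Context: Versions $V=\{v_1,\dots,v_n\}$ and records $R$; $(v,r)\in E$ means version $v$ contains record $r$; $R(v)=\{r:(v,r)\in E\}$, and every record lies in some version, so $R=\bigcup_{v\in V}R(v)$. The version tree $\mathbb{T}$ is a rooted tree on vertex set $V$ whose edges go from a parent version to a child version (derivation relation); the weight of an edge is $w(v_i,v_j)=|R(v_i)\cap R(v_j)|$. Standing assumption (no cross-version diff rule): a record of a version that is not contained in its parent is a newly created record, i.e., for every record $r$ the set of versions containing $r$ is a connected subtree of $\mathbb{T}$. If all versions form one partition, the checkout cost of each version is $|R|$, so the average checkout cost is $|R|$. *)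

theory Defs
  imports Main Complex_Main
begin

definition recs :: "('v \<times> 'r) set \<Rightarrow> 'v \<Rightarrow> 'r set" where
  "recs E v = {r. (v, r) \<in> E}"

definition version_record_graph :: "'v set \<Rightarrow> 'r set \<Rightarrow> ('v \<times> 'r) set \<Rightarrow> bool" where
  "version_record_graph V R E \<longleftrightarrow>
     finite V \<and> finite R \<and> E \<subseteq> V \<times> R \<and> R = (\<Union>v\<in>V. recs E v)"

definition rooted_tree :: "'v set \<Rightarrow> ('v \<times> 'v) set \<Rightarrow> 'v \<Rightarrow> bool" where
  "rooted_tree V T rt \<longleftrightarrow>
     T \<subseteq> V \<times> V \<and> rt \<in> V \<and>
     (\<forall>u. (u, rt) \<notin> T) \<and>
     (\<forall>v\<in>V. v \<noteq> rt \<longrightarrow> (\<exists>!u. (u, v) \<in> T)) \<and>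
     (\<forall>v\<in>V. (rt, v) \<in> T\<^sup>*)"

definition connected_subtree :: "('v \<times> 'v) set \<Rightarrow> 'v set \<Rightarrow> bool" where
  "connected_subtree T S \<longleftrightarrow>
     S \<noteq> {} \<and> (\<forall>u\<in>S. \<forall>w\<in>S. (u, w) \<in> ((T \<union> T\<inverse>) \<inter> (S \<times> S))\<^sup>*)"

text \<open>Standing assumption (no cross-version diff): for every record r the set of
  versions containing r is a connected subtree of the version tree.\<close>

definition version_tree :: "'v set \<Rightarrow> 'r set \<Rightarrow> ('v \<times> 'r) set \<Rightarrow> ('v \<times> 'v) set \<Rightarrow> 'v \<Rightarrow> bool" where
  "version_tree V R E T rt \<longleftrightarrow>
     rooted_tree V T rt \<and> (\<forall>r\<in>R. connected_subtree T {v\<in>V. (v, r) \<in> E})"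

definition weight :: "('v \<times> 'r) set \<Rightarrow> 'v \<Rightarrow> 'v \<Rightarrow> nat" where
  "weight E vi vj = card (recs E vi \<inter> recs E vj)"

text \<open>Average checkout cost when all versions form one partition: each version's
  checkout cost is |R|.\<close>

definition single_partition_avg_cost :: "'v set \<Rightarrow> 'r set \<Rightarrow> real" where
  "single_partition_avg_cost V R = (\<Sum>v\<in>V. real (card R)) / real (card V)"

end

theory Submission
  imports Defs
begin

theorem lemma1:
  fixes V :: "'v set" and R :: "'r set" and E :: "('v \<times> 'r) set"
    and T :: "('v \<times> 'v) set" and rt :: 'v and \<delta> :: real
  assumes "version_record_graph V R E"
    and "version_tree V R E T rt"
    and "card V \<ge> 2"
    and "0 < \<delta>" and "\<delta> \<le> 1"
    and "\<forall>(vi, vj)\<in>T. real (weight E vi vj) > \<delta> * real (card R)"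
  shows "single_partition_avg_cost V R = real (card R)
    \<and> single_partition_avg_cost V R < (1 / \<delta>) * (real (card E) / real (card V))"
proof -
  have fV: "finite V" and fR: "finite R" and ER: "E \<subseteq> V \<times> R"
    using assms(1) unfolding version_record_graph_def by auto
  have rtree: "rooted_tree V T rt" using assms(2) unfolding version_tree_def by auto
  hence TV: "T \<subseteq> V \<times> V" and rtV: "rt \<in> V"
    and par: "\<forall>v\<in>V. v \<noteq> rt \<longrightarrow> (\<exists>!u. (u, v) \<in> T)"
    and reach: "\<forall>v\<in>V. (rt, v) \<in> T\<^sup>*"
    unfolding rooted_tree_def by auto
  have nV: "real (card V) > 0" using assms(3) by simp
  have recsfin: "\<And>v. finite (recs E v)"
    using ER fR by (auto intro: finite_subset[of _ R] simp: recs_def)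
  have wle1: "weight E u v \<le> card (recs E u)" for u v
    unfolding weight_def using recsfin by (simp add: card_mono)
  have wle2: "weight E u v \<le> card (recs E v)" for u v
    unfolding weight_def using recsfin by (simp add: card_mono)
  have big: "real (card (recs E v)) > \<delta> * real (card R)" if "v \<in> V" for v
  proof (cases "v = rt")
    case False
    from par \<open>v \<in> V\<close> False obtain u where "(u, v) \<in> T" by blast
    hence "real (weight E u v) > \<delta> * real (card R)" using assms(6) by auto
    thus ?thesis using wle2[of u v] by linarith
  next
    case True
    have "\<not> V \<subseteq> {rt}"
    proof
      assume "V \<subseteq> {rt}"
      hence "card V \<le> card {rt}" by (intro card_mono) auto
      thus False using assms(3) by simp
    qed
    then obtain w where w: "w \<in> V" "w \<noteq> rt" by blast
    have "(rt, w) \<in> T\<^sup>*" using reach w by auto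
    then obtain c where "(rt, c) \<in> T" using w(2) by (metis converse_rtranclE)
    hence "real (weight E rt c) > \<delta> * real (card R)" using assms(6) by auto
    thus ?thesis using wle1[of rt c] True by (simp; linarith)
  qed
  have Eeq: "E = Sigma V (recs E)" using ER by (auto simp: recs_def)
  have cE: "card E = (\<Sum>v\<in>V. card (recs E v))"
    by (subst Eeq, rule card_SigmaI) (use fV recsfin in auto)
  have Vne: "V \<noteq> {}" using rtV by auto
  have "(\<Sum>v\<in>V. \<delta> * real (card R)) < (\<Sum>v\<in>V. real (card (recs E v)))"
    by (rule sum_strict_mono) (use fV Vne big in auto)
  hence key: "\<delta> * real (card R) * real (card V) < real (card E)"
    by (simp add: cE mult.commute)
  have avg: "single_partition_avg_cost V R = real (card R)"
    unfolding single_partition_avg_cost_def using nV by simp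
  have "real (card R) < (1 / \<delta>) * (real (card E) / real (card V))"
    using key nV assms(4) by (simp add: field_simps)
  thus ?thesis using avg by simp
qed

end
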